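(* Let $\Gamma\in\mathcal S$ with embedding $\varphi$ into $\mathbb Z^n$. If some vertex $v$ satisfies $\varphi(v)=-2E_{i_v}-\sum_{j\in J_v}E_j$ (with $i_v\notin J_v$), then every other vertex $w\ne v$ satisfies $\varphi(w)=E_{i_w}-\sum_{j\in J_w}E_j$ for some index $i_w\notin J_w$.
   Context: A plumbing tree is a finite tree $\Gamma$ each of whose vertices $v$ carries an integer decoration $d(v)$. $\Gamma$ is minimal if no vertex has decoration $-1$. For $n\ge 1$ let $(\mathbb Z^n,Q_n)$ be the lattice with basis $E_1,\dots,E_n$ and $Q_n(E_i,E_j)=-\delta_{ij}$, and let $K=\sum_{i=1}^n E_i$. A plumbing tree $\Gamma$ on $n$ vertices is a symplectic plumbing tree if there is a map $\varphi$ (an embedding) from its vertex set to $\mathbb Z^n$ such that: for distinct vertices $v_1,v_2$, $Q_n(\varphi(v_1),\varphi(v_2))$ is $1$ if they are adjacent and $0$ otherwise; $Q_n(\varphi(v),\varphi(v))=d(v)$ for every $v$; and $Q_n(\varphi(v),K)+Q_n(\varphi(v),\varphi(v))=-2$ for every $v$. $\mathcal S$ is the set of minimal, connected symplectic plumbing trees. *)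

theory Defs
  imports Main
begin

text \<open>Vectors of the lattice Z^n are represented as functions nat => int
  supported on the index set {0..<n}; E i is the i-th standard basis vector
  (indices are 0-based).\<close>

definition in_lattice :: "nat \<Rightarrow> (nat \<Rightarrow> int) \<Rightarrow> bool" where
  "in_lattice n x \<longleftrightarrow> (\<forall>i\<ge>n. x i = 0)"

definition Q :: "nat \<Rightarrow> (nat \<Rightarrow> int) \<Rightarrow> (nat \<Rightarrow> int) \<Rightarrow> int" where
  "Q n x y = - (\<Sum>i<n. x i * y i)"

definition E :: "nat \<Rightarrow> nat \<Rightarrow> int" where
  "E i = (\<lambda>k. if k = i then 1 else 0)"

definition Kvec :: "nat \<Rightarrow> nat \<Rightarrow> int" where
  "Kvec n = (\<lambda>k. if k < n then 1 else 0)"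

definition simple_graph :: "'v set \<Rightarrow> ('v \<Rightarrow> 'v \<Rightarrow> bool) \<Rightarrow> bool" where
  "simple_graph V Adj \<longleftrightarrow> finite V \<and>
     (\<forall>x y. Adj x y \<longrightarrow> x \<in> V \<and> y \<in> V) \<and>
     (\<forall>x y. Adj x y \<longrightarrow> Adj y x) \<and> (\<forall>x. \<not> Adj x x)"

definition graph_connected :: "'v set \<Rightarrow> ('v \<Rightarrow> 'v \<Rightarrow> bool) \<Rightarrow> bool" where
  "graph_connected V Adj \<longleftrightarrow> V \<noteq> {} \<and> (\<forall>x\<in>V. \<forall>y\<in>V. Adj\<^sup>*\<^sup>* x y)"

definition is_cycle :: "('v \<Rightarrow> 'v \<Rightarrow> bool) \<Rightarrow> 'v list \<Rightarrow> bool" where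
  "is_cycle Adj cs \<longleftrightarrow> length cs \<ge> 3 \<and> distinct cs \<and>
     (\<forall>i. Suc i < length cs \<longrightarrow> Adj (cs ! i) (cs ! Suc i)) \<and>
     Adj (last cs) (hd cs)"

definition is_tree :: "'v set \<Rightarrow> ('v \<Rightarrow> 'v \<Rightarrow> bool) \<Rightarrow> bool" where
  "is_tree V Adj \<longleftrightarrow> simple_graph V Adj \<and> graph_connected V Adj \<and>
     (\<nexists>cs. is_cycle Adj cs)"

definition symplectic_embedding ::
  "'v set \<Rightarrow> ('v \<Rightarrow> 'v \<Rightarrow> bool) \<Rightarrow> ('v \<Rightarrow> int) \<Rightarrow> ('v \<Rightarrow> nat \<Rightarrow> int) \<Rightarrow> bool" where
  "symplectic_embedding V Adj d \<phi> \<longleftrightarrow>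
     (let n = card V in
       (\<forall>v\<in>V. in_lattice n (\<phi> v)) \<and>
       (\<forall>v1\<in>V. \<forall>v2\<in>V. v1 \<noteq> v2 \<longrightarrow> Q n (\<phi> v1) (\<phi> v2) = (if Adj v1 v2 then 1 else 0)) \<and>
       (\<forall>v\<in>V. Q n (\<phi> v) (\<phi> v) = d v) \<and>
       (\<forall>v\<in>V. Q n (\<phi> v) (Kvec n) + Q n (\<phi> v) (\<phi> v) = -2))"

definition symplectic_plumbing_tree ::
  "'v set \<Rightarrow> ('v \<Rightarrow> 'v \<Rightarrow> bool) \<Rightarrow> ('v \<Rightarrow> int) \<Rightarrow> bool" where
  "symplectic_plumbing_tree V Adj d \<longleftrightarrow> is_tree V Adj \<and> (\<exists>\<phi>. symplectic_embedding V Adj d \<phi>)"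

definition minimal_plumbing :: "'v set \<Rightarrow> ('v \<Rightarrow> int) \<Rightarrow> bool" where
  "minimal_plumbing V d \<longleftrightarrow> (\<forall>v\<in>V. d v \<noteq> -1)"

text \<open>Membership in the class S (trees are connected by definition).\<close>

definition in_S :: "'v set \<Rightarrow> ('v \<Rightarrow> 'v \<Rightarrow> bool) \<Rightarrow> ('v \<Rightarrow> int) \<Rightarrow> bool" where
  "in_S V Adj d \<longleftrightarrow> minimal_plumbing V d \<and> graph_connected V Adj \<and>
     symplectic_plumbing_tree V Adj d"

end

theory Submission
  imports Defs
begin

lemma step_nonpos:
  fixes P u :: "nat \<Rightarrow> int"
  assumes P: "\<forall>l<N. P l \<le> 0" and u1: "\<forall>l<N. u l \<le> 1"
    and uniq: "\<forall>l<N. \<forall>l'<N. l \<noteq> l' \<longrightarrow> u l > 0 \<longrightarrow> u l' \<le> 0"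
    and dot: "(\<Sum>l<N. P l * u l) = -1"
  shows "\<forall>l<N. P l + u l \<le> 0"
proof (intro allI impI, rule ccontr)
  fix c assume c: "c < N" and "\<not> P c + u c \<le> 0"
  then have uc: "u c = 1" and pc: "P c = 0" using P u1 by force+
  have "\<forall>l\<in>{..<N}. 0 \<le> P l * u l"
  proof
    fix l assume l: "l \<in> {..<N}"
    show "0 \<le> P l * u l"
    proof (cases "l = c")
      case True then show ?thesis using pc by simp
    next
      case False
      then have "u l \<le> 0" using uniq c l uc by force
      moreover have "P l \<le> 0" using P l by auto
      ultimately show ?thesis by (simp add: mult_nonpos_nonpos)
    qed
  qed
  then have "0 \<le> (\<Sum>l<N. P l * u l)" by (intro sum_nonneg) auto
  then show False using dot by simp
qed

lemma term_nonneg: "0 \<le> (x::int) * x + x"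
proof (cases "x \<ge> 0")
  case True then show ?thesis by simp
next
  case False then have "x * x + x = x * (x + 1)" "x \<le> -1" by (auto simp: algebra_simps)
  then show ?thesis by (simp add: mult_nonpos_nonpos)
qed

lemma two_terms:
  fixes x :: "nat \<Rightarrow> int"
  assumes n2: "(\<Sum>l<N. x l * x l + x l) = 2" and a: "a < N" and b: "b < N" and ab: "a \<noteq> b"
  shows "(x a * x a + x a) + (x b * x b + x b) \<le> 2"
proof -
  have "(\<Sum>l\<in>{a,b}. x l * x l + x l) \<le> (\<Sum>l<N. x l * x l + x l)"
    by (rule sum_mono2) (use a b term_nonneg in auto)
  then show ?thesis using ab n2 by simp
qed

lemma one_term:
  fixes x :: "nat \<Rightarrow> int"
  assumes n2: "(\<Sum>l<N. x l * x l + x l) = 2" and a: "a < N"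
  shows "x a * x a + x a \<le> 2"
proof -
  have "(\<Sum>l\<in>{a}. x l * x l + x l) \<le> (\<Sum>l<N. x l * x l + x l)"
    by (rule sum_mono2) (use a term_nonneg in auto)
  then show ?thesis using n2 by simp
qed

lemma pos_le1:
  fixes x :: "nat \<Rightarrow> int"
  assumes n2: "(\<Sum>l<N. x l * x l + x l) = 2" and a: "a < N"
  shows "x a \<le> 1"
proof (rule ccontr)
  assume "\<not> x a \<le> 1"
  then have "x a \<ge> 2" by simp
  then have "x a * x a \<ge> 2 * 2" using mult_mono[of 2 "x a" 2 "x a"] by simp
  then show False using one_term[OF n2 a] \<open>x a \<ge> 2\<close> by simp
qed

lemma other_terms:
  fixes x :: "nat \<Rightarrow> int"
  assumes n2: "(\<Sum>l<N. x l * x l + x l) = 2" and a: "a < N" and b: "b < N" and ab: "a \<noteq> b"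
    and pa: "x a > 0"
  shows "x b = 0 \<or> x b = -1"
proof -
  have "x a = 1" using pos_le1[OF n2 a] pa by simp
  then have t: "x b * x b + x b \<le> 0" using two_terms[OF n2 a b ab] by simp
  show ?thesis
  proof (rule ccontr)
    assume h: "\<not> (x b = 0 \<or> x b = -1)"
    then consider "x b \<ge> 1" | "x b \<le> -2" by linarith
    then show False
    proof cases
      case 1 then show False using t by (smt (verit) mult_nonneg_nonneg)
    next
      case 2
      then have "x b * x b + x b = x b * (x b + 1)" by (simp add: algebra_simps)
      moreover have "x b * (x b + 1) \<ge> 2"
      proof -
        have "(- x b) * (-(x b + 1)) \<ge> 2 * 1"
          by (rule mult_mono) (use 2 in auto)
        then show ?thesis by (simp add: algebra_simps)
      qed
      ultimately show False using t by simp
    qed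
  qed
qed

lemma seg:
  assumes "\<forall>k<n. R (f k) (f (Suc k))" "i \<le> j" "j \<le> n"
  shows "(R ^^ (j - i)) (f i) (f j)"
  unfolding relpowp_fun_conv
  by (rule exI[of _ "\<lambda>k. f (i + k)"]) (use assms in auto)


theorem proposition3p4:
  fixes V :: "'v set" and Adj :: "'v \<Rightarrow> 'v \<Rightarrow> bool" and d :: "'v \<Rightarrow> int"
    and \<phi> :: "'v \<Rightarrow> nat \<Rightarrow> int" and v :: 'v and iv :: nat and Jv :: "nat set"
  assumes "in_S V Adj d"
    and "symplectic_embedding V Adj d \<phi>"
    and "v \<in> V"
    and "iv < card V" and "Jv \<subseteq> {..<card V}" and "iv \<notin> Jv"
    and "\<phi> v = (\<lambda>k. - 2 * E iv k - (\<Sum>j\<in>Jv. E j k))"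
  shows "\<forall>w\<in>V. w \<noteq> v \<longrightarrow>
           (\<exists>iw Jw. iw < card V \<and> Jw \<subseteq> {..<card V} \<and> iw \<notin> Jw \<and>
              \<phi> w = (\<lambda>k. E iw k - (\<Sum>j\<in>Jw. E j k)))"
proof -
  define N where "N = card V"
  have emb: "symplectic_embedding V Adj d \<phi>" by fact
  have lat: "\<forall>u\<in>V. \<forall>l\<ge>N. \<phi> u l = 0"
    using emb unfolding symplectic_embedding_def Let_def in_lattice_def N_def by blast
  have dotE: "(\<Sum>l<N. \<phi> a l * \<phi> b l) = - (if Adj a b then 1 else 0)"
    if "a \<in> V" "b \<in> V" "a \<noteq> b" for a b
  proof -
    have "Q N (\<phi> a) (\<phi> b) = (if Adj a b then 1 else 0)"
      using emb that unfolding symplectic_embedding_def Let_def N_def by blast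
    then show ?thesis unfolding Q_def by (simp split: if_splits)
  qed
  have norm2: "(\<Sum>l<N. \<phi> u l * \<phi> u l + \<phi> u l) = 2" if "u \<in> V" for u
  proof -
    have "Q N (\<phi> u) (Kvec N) + Q N (\<phi> u) (\<phi> u) = -2"
      using emb that unfolding symplectic_embedding_def Let_def N_def by blast
    moreover have "(\<Sum>l<N. \<phi> u l * Kvec N l) = (\<Sum>l<N. \<phi> u l)"
      by (rule sum.cong) (auto simp: Kvec_def)
    ultimately show ?thesis unfolding Q_def by (simp add: sum.distrib)
  qed
  have sg: "simple_graph V Adj" and conn: "graph_connected V Adj"
    using assms(1) unfolding in_S_def symplectic_plumbing_tree_def is_tree_def by auto
  have AdjV: "Adj a b \<Longrightarrow> a \<in> V \<and> b \<in> V" for a b using sg unfolding simple_graph_def by blast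
  have vneg: "\<forall>l<N. \<phi> v l \<le> 0"
  proof (intro allI impI)
    fix l
    have "0 \<le> (\<Sum>j\<in>Jv. E j l)" by (intro sum_nonneg) (auto simp: E_def)
    moreover have "0 \<le> E iv l" by (auto simp: E_def)
    ultimately show "\<phi> v l \<le> 0" using assms(7) by simp
  qed
  have nopos: "\<not> (\<forall>l<N. \<phi> w l \<le> 0)" if w: "w \<in> V" "w \<noteq> v" for w
  proof
    assume wneg: "\<forall>l<N. \<phi> w l \<le> 0"
    have "Adj\<^sup>*\<^sup>* v w" using conn w assms(3) unfolding graph_connected_def by blast
    then obtain n0 where "(Adj ^^ n0) v w" using rtranclp_imp_relpowp by metis
    define n where "n = (LEAST n. (Adj ^^ n) v w)"
    have pn: "(Adj ^^ n) v w" unfolding n_def by (rule LeastI) fact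
    have minn: "\<not> (Adj ^^ m) v w" if "m < n" for m using not_less_Least[of m] that n_def by blast
    obtain f where f0: "f 0 = v" and fn: "f n = w" and fc: "\<forall>i<n. Adj (f i) (f (Suc i))"
      using pn unfolding relpowp_fun_conv by blast
    have n0: "n \<noteq> 0" using pn w by (cases n) auto
    have fV: "f i \<in> V" if "i \<le> n" for i
    proof (cases "i < n")
      case True then show ?thesis using fc AdjV by blast
    next
      case False then show ?thesis using that fn w by auto
    qed
    have M1: "f i \<noteq> f j" if "i < j" "j \<le> n" for i j
    proof
      assume eq: "f i = f j"
      have "(Adj ^^ (i - 0)) (f 0) (f i)" by (rule seg) (use fc that in auto)
      moreover have "(Adj ^^ (n - j)) (f j) (f n)" by (rule seg) (use fc that in auto)
      ultimately have "(Adj ^^ i OO Adj ^^ (n - j)) v w" using eq f0 fn by auto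
      then have "(Adj ^^ (i + (n - j))) v w" by (simp add: relpowp_add)
      then show False using minn that by auto
    qed
    have M2: "\<not> Adj (f i) (f j)" if "Suc i < j" "j \<le> n" for i j
    proof
      assume eq: "Adj (f i) (f j)"
      have "(Adj ^^ (i - 0)) (f 0) (f i)" by (rule seg) (use fc that in auto)
      moreover have "(Adj ^^ (n - j)) (f j) (f n)" by (rule seg) (use fc that in auto)
      ultimately have "(Adj ^^ Suc i OO Adj ^^ (n - j)) v w" using eq f0 fn by auto
      then have "(Adj ^^ (Suc i + (n - j))) v w" by (simp only: relpowp_add)
      moreover have "Suc i + (n - j) < n" using that by auto
      ultimately show False using minn by blast
    qed
    define S where "S k l = (\<Sum>i\<le>k. \<phi> (f i) l)" for k l
    have D: "(\<Sum>l<N. S k l * \<phi> (f (Suc k)) l) = -1" if k: "Suc k \<le> n" for k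
    proof -
      have "(\<Sum>l<N. S k l * \<phi> (f (Suc k)) l)
          = (\<Sum>i\<le>k. \<Sum>l<N. \<phi> (f i) l * \<phi> (f (Suc k)) l)"
        unfolding S_def by (simp add: sum_distrib_right sum.swap[of _ "{..<N}"])
      also have "\<dots> = (\<Sum>i\<le>k. if i = k then -1 else 0)"
      proof (rule sum.cong)
        fix i assume i: "i \<in> {..k}"
        have ne: "f i \<noteq> f (Suc k)" using M1 i k by auto
        show "(\<Sum>l<N. \<phi> (f i) l * \<phi> (f (Suc k)) l) = (if i = k then -1 else 0)"
        proof (cases "i = k")
          case True then show ?thesis using dotE[OF fV fV ne] fc k by auto
        next
          case False then have "Suc i < Suc k" using i by auto
          then show ?thesis using dotE[OF fV fV ne] M2[of i "Suc k"] k i False by auto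
        qed
      qed simp
      also have "\<dots> = -1" by simp
      finally show ?thesis .
    qed
    have Sneg: "\<forall>l<N. S k l \<le> 0" if "k < n" for k
      using that
    proof (induction k)
      case 0 then show ?case using vneg f0 by (simp add: S_def)
    next
      case (Suc k)
      have u: "f (Suc k) \<in> V" using fV Suc by auto
      have "\<forall>l<N. S k l + \<phi> (f (Suc k)) l \<le> 0"
      proof (rule step_nonpos)
        show "\<forall>l<N. S k l \<le> 0" using Suc by auto
        show "\<forall>l<N. \<phi> (f (Suc k)) l \<le> 1" using pos_le1[OF norm2[OF u]] by blast
        show "\<forall>l<N. \<forall>l'<N. l \<noteq> l' \<longrightarrow> \<phi> (f (Suc k)) l > 0 \<longrightarrow> \<phi> (f (Suc k)) l' \<le> 0"
          using other_terms[OF norm2[OF u]] by fastforce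
        show "(\<Sum>l<N. S k l * \<phi> (f (Suc k)) l) = -1" using D Suc by auto
      qed
      then show ?case by (simp add: S_def)
    qed
    have "\<forall>l<N. S (n - 1) l \<le> 0" using Sneg n0 by auto
    have "0 \<le> (\<Sum>l<N. S (n - 1) l * \<phi> (f (Suc (n - 1))) l)"
      using Sneg[of "n - 1"] n0 fn wneg by (intro sum_nonneg) (auto simp: mult_nonpos_nonpos)
    then show False using D[of "n - 1"] n0 by simp
  qed
  show ?thesis
  proof (intro ballI impI)
    fix w assume w: "w \<in> V" "w \<noteq> v"
    obtain c where c: "c < N" "\<phi> w c > 0" using nopos[OF w] by force
    have xc: "\<phi> w c = 1" using pos_le1[OF norm2[OF w(1)] c(1)] c by simp
    define Jw where "Jw = {l. l < N \<and> \<phi> w l = -1}"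
    have cJ: "c \<notin> Jw" using xc Jw_def by auto
    have fin: "finite Jw" unfolding Jw_def by auto
    have "\<phi> w = (\<lambda>k. E c k - (\<Sum>j\<in>Jw. E j k))"
    proof
      fix k
      have s: "(\<Sum>j\<in>Jw. E j k) = (if k \<in> Jw then 1 else 0)"
        unfolding E_def using fin by (simp add: sum.delta)
      show "\<phi> w k = E c k - (\<Sum>j\<in>Jw. E j k)"
      proof (cases "k < N")
        case False then show ?thesis using lat w c using fin unfolding Jw_def E_def by (auto simp: sum.delta sum.delta')
      next
        case True
        show ?thesis
        proof (cases "k = c")
          case True then show ?thesis using xc cJ fin unfolding E_def by (auto simp: sum.delta sum.delta')
        next
          case False
          then have "\<phi> w k = 0 \<or> \<phi> w k = -1"
            using other_terms[OF norm2[OF w(1)] c(1) \<open>k < N\<close> _ c(2)] by auto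
          then show ?thesis using False \<open>k < N\<close> using fin unfolding Jw_def E_def by (auto simp: sum.delta sum.delta')
        qed
      qed
    qed
    moreover have "Jw \<subseteq> {..<card V}" unfolding Jw_def N_def by auto
    ultimately show "\<exists>iw Jw. iw < card V \<and> Jw \<subseteq> {..<card V} \<and> iw \<notin> Jw \<and>
              \<phi> w = (\<lambda>k. E iw k - (\<Sum>j\<in>Jw. E j k))"
      using c cJ N_def by blast
  qed
qed

end
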